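(* For every $m\geq 1$, $\mathrm{capt}(T_{m+1},m)=4m-2$.
   Context: The subdivided star $T_n$ is obtained from the star $K_{1,n}$ by adding $n$ new vertices and joining each new vertex to a distinct leaf of the star (so $T_n$ has $2n+1$ vertices and diameter $4$ for $n\geq 2$). All graphs are reflexive (a player may stay in place). The game of $k$ cops and $m$ robbers on $G$: in round 0 the cops first choose starting vertices, then the robbers choose theirs. In each round $i\geq 1$, all cops move (each to an adjacent vertex or staying), then all robbers move likewise. Several players may occupy the same vertex. Whenever a cop and some robbers occupy the same vertex, those robbers are captured and take no further part in the game. Both sides have full information. The cops win if all robbers are captured after finitely many rounds. For a cop-win graph $G$, $\mathrm{capt}(G,m)$ is the index of the round in which the last robber is captured when one cop plays to minimize this index and $m$ robbers play to maximize it. *)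

theory Defs
  imports Main
begin

text \<open>Subdivided star T_n on vertices 0..2n: centre 0, leaves 1..n of the star,
  new vertex i+n attached to leaf i. Adjacency is reflexive (players may stay).\<close>

definition tstar_V :: "nat \<Rightarrow> nat set" where
  "tstar_V n = {0..2*n}"

definition tstar_adj :: "nat \<Rightarrow> nat \<Rightarrow> nat \<Rightarrow> bool" where
  "tstar_adj n u v \<longleftrightarrow> u = v
     \<or> (u = 0 \<and> 1 \<le> v \<and> v \<le> n) \<or> (v = 0 \<and> 1 \<le> u \<and> u \<le> n)
     \<or> (1 \<le> u \<and> u \<le> n \<and> v = u + n) \<or> (1 \<le> v \<and> v \<le> n \<and> u = v + n)"

text \<open>Robber positions: a list of length m, None = already captured.\<close>

definition capture :: "'v \<Rightarrow> 'v option list \<Rightarrow> 'v option list" where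
  "capture c rs = map (\<lambda>r. if r = Some c then None else r) rs"

definition robber_moves :: "'v set \<Rightarrow> ('v \<Rightarrow> 'v \<Rightarrow> bool) \<Rightarrow> 'v option list \<Rightarrow> 'v option list \<Rightarrow> bool" where
  "robber_moves V adj rs rs' \<longleftrightarrow> length rs' = length rs \<and>
     (\<forall>i<length rs. (rs ! i = None \<longrightarrow> rs' ! i = None) \<and>
        (\<forall>x. rs ! i = Some x \<longrightarrow> (\<exists>y\<in>V. adj x y \<and> rs' ! i = Some y)))"

text \<open>cop_wins_within V adj j c rs: from the position at the end of a round
  (cop on c, robbers rs), the cop can force that all robbers are captured
  within at most j further rounds.\<close>

fun cop_wins_within :: "'v set \<Rightarrow> ('v \<Rightarrow> 'v \<Rightarrow> bool) \<Rightarrow> nat \<Rightarrow> 'v \<Rightarrow> 'v option list \<Rightarrow> bool" where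
  "cop_wins_within V adj 0 c rs = (\<forall>r\<in>set rs. r = None)"
| "cop_wins_within V adj (Suc j) c rs =
     ((\<forall>r\<in>set rs. r = None) \<or>
      (\<exists>c'\<in>V. adj c c' \<and>
         (\<forall>rs'. robber_moves V adj (capture c' rs) rs' \<longrightarrow>
                cop_wins_within V adj j c' (capture c' rs'))))"

text \<open>One cop can force capture of all m robbers by round k (round 0 = placement).\<close>

definition capt_by :: "'v set \<Rightarrow> ('v \<Rightarrow> 'v \<Rightarrow> bool) \<Rightarrow> nat \<Rightarrow> nat \<Rightarrow> bool" where
  "capt_by V adj m k \<longleftrightarrow>
     (\<exists>c0\<in>V. \<forall>rs. length rs = m \<and> set rs \<subseteq> V \<longrightarrow>
        cop_wins_within V adj k c0 (capture c0 (map Some rs)))"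

definition capt :: "'v set \<Rightarrow> ('v \<Rightarrow> 'v \<Rightarrow> bool) \<Rightarrow> nat \<Rightarrow> nat" where
  "capt V adj m = (LEAST k. capt_by V adj m k)"

end

theory Submission
  imports Defs
begin

definition LL :: "'v option list \<Rightarrow> nat set" where
  "LL rs = {i. i < length rs \<and> rs ! i \<noteq> None}"

definition pos :: "'v option list \<Rightarrow> 'v set" where
  "pos rs = {x. Some x \<in> set rs}"

lemma LL_finite: "finite (LL rs)"
  unfolding LL_def by (rule finite_subset[of _ "{..<length rs}"]) auto

lemma allNone_LL: "(\<forall>r\<in>set rs. r = None) \<longleftrightarrow> LL rs = {}"
  unfolding LL_def by (force simp: in_set_conv_nth)

lemma cww_none: "\<forall>r\<in>set rs. r = None \<Longrightarrow> cop_wins_within V adj j c rs"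
  by (cases j) auto

lemma capture_len[simp]: "length (capture c rs) = length rs"
  by (simp add: capture_def)

lemma capture_nth: "i < length rs \<Longrightarrow> capture c rs ! i = (if rs ! i = Some c then None else rs ! i)"
  by (simp add: capture_def)

lemma LL_capture: "LL (capture c rs) \<subseteq> LL rs"
  unfolding LL_def by (auto simp: capture_nth split: if_splits)

lemma rm_len: "robber_moves V adj rs rs' \<Longrightarrow> length rs' = length rs"
  by (simp add: robber_moves_def)

lemma rm_LL: "robber_moves V adj rs rs' \<Longrightarrow> LL rs' \<subseteq> LL rs"
  unfolding LL_def robber_moves_def by auto

lemma rm_V: "robber_moves V adj rs rs' \<Longrightarrow> Some y \<in> set rs' \<Longrightarrow> y \<in> V"
proof -
  assume rm: "robber_moves V adj rs rs'" and y: "Some y \<in> set rs'"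
  then obtain i where i: "i < length rs'" "rs' ! i = Some y" by (auto simp: in_set_conv_nth)
  have l: "length rs' = length rs" using rm by (simp add: robber_moves_def)
  show "y \<in> V"
  proof (cases "rs ! i")
    case None
    then show ?thesis using rm i l unfolding robber_moves_def by auto
  next
    case (Some x)
    then show ?thesis using rm i l unfolding robber_moves_def by force
  qed
qed

lemma rm_some: "robber_moves V adj rs rs' \<Longrightarrow> i < length rs \<Longrightarrow> rs ! i = Some x \<Longrightarrow> \<exists>y\<in>V. adj x y \<and> rs' ! i = Some y"
  unfolding robber_moves_def by blast

lemma rm_none: "robber_moves V adj rs rs' \<Longrightarrow> i < length rs \<Longrightarrow> rs ! i = None \<Longrightarrow> rs' ! i = None"
  unfolding robber_moves_def by blast

lemma capture_rm_V: "robber_moves V adj rs rs' \<Longrightarrow> \<forall>y. Some y \<in> set (capture c rs') \<longrightarrow> y \<in> V \<and> y \<noteq> c"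
proof (intro allI impI)
  fix y assume rm: "robber_moves V adj rs rs'" and y: "Some y \<in> set (capture c rs')"
  then have "Some y \<in> set rs'" "y \<noteq> c" unfolding capture_def by (auto split: if_splits)
  then show "y \<in> V \<and> y \<noteq> c" using rm_V[OF rm] by blast
qed

lemma capture_pos: "Some y \<in> set (capture c rs) \<Longrightarrow> Some y \<in> set rs \<and> y \<noteq> c"
  unfolding capture_def by (auto split: if_splits)

lemma pos_capture: "pos (capture c rs) = pos rs - {c}"
  unfolding pos_def capture_def by (auto split: if_splits)

lemma capture_idem: "capture c (capture c rs) = capture c rs"
  unfolding capture_def by (induct rs) auto

lemma exc:
  assumes n: "n \<ge> 1"
    and P: "\<forall>x. Some x \<in> set rs \<longrightarrow> x \<in> tstar_V n \<and> x \<noteq> 0"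
    and ne: "LL rs \<noteq> {}"
    and H: "\<forall>b s. 1 \<le> b \<and> b \<le> n \<longrightarrow> (\<forall>x. Some x \<in> set s \<longrightarrow> x \<in> tstar_V n)
              \<longrightarrow> card (LL s) < card (LL rs) \<longrightarrow> cop_wins_within (tstar_V n) (tstar_adj n) j (b+n) s"
  shows "cop_wins_within (tstar_V n) (tstar_adj n) (Suc (Suc j)) 0 rs"
proof -
  obtain i0 x where i0: "i0 < length rs" "rs ! i0 = Some x" using ne unfolding LL_def by auto
  have xV: "x \<in> tstar_V n" "x \<noteq> 0" using P i0 by (auto simp: in_set_conv_nth)
  define b where "b = (if x \<le> n then x else x - n)"
  have b: "1 \<le> b" "b \<le> n" "x = b \<or> x = b + n" using xV unfolding b_def tstar_V_def by auto
  have adj0: "tstar_adj n 0 b" using b by (simp add: tstar_adj_def)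
  have bV: "b \<in> tstar_V n" "b + n \<in> tstar_V n" using b by (auto simp: tstar_V_def)
  have adjb: "tstar_adj n b (b+n)" using b by (simp add: tstar_adj_def)
  have main: "cop_wins_within (tstar_V n) (tstar_adj n) j (b+n) (capture (b+n) rs2)"
    if rm1: "robber_moves (tstar_V n) (tstar_adj n) (capture b rs) rs1"
    and rm2: "robber_moves (tstar_V n) (tstar_adj n) (capture (b+n) (capture b rs1)) rs2" for rs1 rs2
  proof -
    have l1: "length rs1 = length rs" using rm_len[OF rm1] by simp
    have l2: "length rs2 = length rs" using rm_len[OF rm2] l1 by simp
    have s1: "capture (b+n) (capture b rs1) ! i0 = None"
    proof (cases "x = b")
      case True
      then have "capture b rs ! i0 = None" using i0 by (simp add: capture_nth)
      then have "rs1 ! i0 = None" using rm_none[OF rm1] i0 by simp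
      then show ?thesis using i0 l1 by (simp add: capture_nth)
    next
      case False
      then have xb: "x = b + n" using b by auto
      then have "capture b rs ! i0 = Some (b+n)" using i0 False by (simp add: capture_nth)
      then obtain y where y: "tstar_adj n (b+n) y" "rs1 ! i0 = Some y"
        using rm_some[OF rm1, of i0 "b+n"] i0 by auto
      have "y = b + n \<or> y = b" using y(1) b unfolding tstar_adj_def by auto
      then show ?thesis using i0 l1 y by (auto simp: capture_nth)
    qed
    have "rs2 ! i0 = None" using rm_none[OF rm2, of i0] s1 i0 l1 by simp
    then have nI: "i0 \<notin> LL (capture (b+n) rs2)" unfolding LL_def by (auto simp: capture_nth)
    have sub: "LL (capture (b+n) rs2) \<subseteq> LL rs"
      using LL_capture[of "b+n" rs2] rm_LL[OF rm2] LL_capture[of "b+n" "capture b rs1"]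
        LL_capture[of b rs1] rm_LL[OF rm1] LL_capture[of b rs] by blast
    have "i0 \<in> LL rs" using i0 unfolding LL_def by auto
    then have "LL (capture (b+n) rs2) \<subset> LL rs" using sub nI by blast
    then have "card (LL (capture (b+n) rs2)) < card (LL rs)" using LL_finite by (rule psubset_card_mono[rotated])
    moreover have "\<forall>y. Some y \<in> set (capture (b+n) rs2) \<longrightarrow> y \<in> tstar_V n"
      using capture_rm_V[OF rm2, of "b+n"] by blast
    ultimately show ?thesis using b by (intro H[rule_format]) auto
  qed
  show ?thesis
    apply (simp only: cop_wins_within.simps)
    apply (rule disjI2)
    apply (rule bexI[of _ b])
     apply (intro conjI adj0 allI impI)
     apply (rule disjI2)
     apply (rule bexI[of _ "b+n"])
      apply (intro conjI adjb allI impI)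
      apply (rule main; assumption)
    using bV by auto
qed

lemma back_home:
  assumes n: "1 \<le> b" "b \<le> n"
    and H: "\<forall>s. (\<forall>x. Some x \<in> set s \<longrightarrow> x \<in> tstar_V n \<and> x \<noteq> 0)
              \<longrightarrow> card (LL s) \<le> card (LL rs) \<longrightarrow> cop_wins_within (tstar_V n) (tstar_adj n) j 0 s"
  shows "cop_wins_within (tstar_V n) (tstar_adj n) (Suc (Suc j)) (b+n) rs"
proof -
  have adj1: "tstar_adj n (b+n) b" using n by (simp add: tstar_adj_def)
  have adj2: "tstar_adj n b 0" using n by (simp add: tstar_adj_def)
  have bV: "b \<in> tstar_V n" "0 \<in> tstar_V n" using n by (auto simp: tstar_V_def)
  have main: "cop_wins_within (tstar_V n) (tstar_adj n) j 0 (capture 0 rs2)"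
    if rm1: "robber_moves (tstar_V n) (tstar_adj n) (capture b rs) rs1"
    and rm2: "robber_moves (tstar_V n) (tstar_adj n) (capture 0 (capture b rs1)) rs2" for rs1 rs2
  proof -
    have sub: "LL (capture 0 rs2) \<subseteq> LL rs"
      using LL_capture[of 0 rs2] rm_LL[OF rm2] LL_capture[of 0 "capture b rs1"]
        LL_capture[of b rs1] rm_LL[OF rm1] LL_capture[of b rs] by blast
    then have "card (LL (capture 0 rs2)) \<le> card (LL rs)" using LL_finite card_mono by blast
    moreover have "\<forall>y. Some y \<in> set (capture 0 rs2) \<longrightarrow> y \<in> tstar_V n \<and> y \<noteq> 0"
      using capture_rm_V[OF rm2, of 0] by blast
    ultimately show ?thesis using H by blast
  qed
  show ?thesis
    apply (simp only: cop_wins_within.simps)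
    apply (rule disjI2)
    apply (rule bexI[of _ b])
     apply (intro conjI adj1 allI impI)
     apply (rule disjI2)
     apply (rule bexI[of _ 0])
      apply (intro conjI adj2 allI impI)
      apply (rule main; assumption)
    using bV by auto
qed

lemma upper:
  assumes n: "n \<ge> 1"
  shows "\<forall>rs. (\<forall>x. Some x \<in> set rs \<longrightarrow> x \<in> tstar_V n \<and> x \<noteq> 0) \<longrightarrow> card (LL rs) \<le> Suc k
      \<longrightarrow> cop_wins_within (tstar_V n) (tstar_adj n) (4*k+2) 0 rs"
proof (induction k)
  case 0
  show ?case
  proof (intro allI impI)
    fix rs :: "nat option list"
    assume P: "\<forall>x. Some x \<in> set rs \<longrightarrow> x \<in> tstar_V n \<and> x \<noteq> 0" and c: "card (LL rs) \<le> Suc 0"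
    show "cop_wins_within (tstar_V n) (tstar_adj n) (4*0+2) 0 rs"
    proof (cases "LL rs = {}")
      case True then show ?thesis using allNone_LL cww_none by metis
    next
      case False
      have "cop_wins_within (tstar_V n) (tstar_adj n) (Suc (Suc 0)) 0 rs"
      proof (rule exc[OF n P False], intro allI impI)
        fix b and s :: "nat option list"
        assume "card (LL s) < card (LL rs)"
        then have "card (LL s) = 0" using c by simp
        then have "LL s = {}" using LL_finite[of s] by simp
        then show "cop_wins_within (tstar_V n) (tstar_adj n) 0 (b+n) s" using allNone_LL cww_none by metis
      qed
      then show ?thesis by simp
    qed
  qed
next
  case (Suc k)
  show ?case
  proof (intro allI impI)
    fix rs :: "nat option list"
    assume P: "\<forall>x. Some x \<in> set rs \<longrightarrow> x \<in> tstar_V n \<and> x \<noteq> 0" and c: "card (LL rs) \<le> Suc (Suc k)"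
    show "cop_wins_within (tstar_V n) (tstar_adj n) (4*Suc k+2) 0 rs"
    proof (cases "LL rs = {}")
      case True then show ?thesis using allNone_LL cww_none by metis
    next
      case False
      have "cop_wins_within (tstar_V n) (tstar_adj n) (Suc (Suc (Suc (Suc (4*k+2))))) 0 rs"
      proof (rule exc[OF n P False], intro allI impI)
        fix b and s :: "nat option list"
        assume b: "1 \<le> b \<and> b \<le> n" and cs: "card (LL s) < card (LL rs)"
        show "cop_wins_within (tstar_V n) (tstar_adj n) (Suc (Suc (4*k+2))) (b+n) s"
        proof (rule back_home)
          show "1 \<le> b" "b \<le> n" using b by auto
          show "\<forall>s'. (\<forall>x. Some x \<in> set s' \<longrightarrow> x \<in> tstar_V n \<and> x \<noteq> 0) \<longrightarrow>
              card (LL s') \<le> card (LL s) \<longrightarrow> cop_wins_within (tstar_V n) (tstar_adj n) (4 * k + 2) 0 s'"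
            using Suc.IH cs c by fastforce
        qed
      qed
      then show ?thesis by (simp add: numeral_eq_Suc)
    qed
  qed
qed

definition dd :: "nat \<Rightarrow> nat \<Rightarrow> nat set \<Rightarrow> nat" where
  "dd n c P = (if c = 0 then 2 else if c \<le> n then (if c + n \<in> P then 1 else 3) else 4)"

lemma rm_refl: "(\<forall>x. Some x \<in> set s \<longrightarrow> x \<in> V) \<Longrightarrow> robber_moves V (tstar_adj n) s s"
proof -
  assume A: "\<forall>x. Some x \<in> set s \<longrightarrow> x \<in> V"
  have "\<forall>i<length s. \<forall>x. s ! i = Some x \<longrightarrow> (\<exists>y\<in>V. tstar_adj n x y \<and> s ! i = Some y)"
  proof (intro allI impI)
    fix i x assume "i < length s" "s ! i = Some x"
    then have "x \<in> V" using A nth_mem by metis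
    moreover have "tstar_adj n x x" by (simp add: tstar_adj_def)
    ultimately show "\<exists>y\<in>V. tstar_adj n x y \<and> s ! i = Some y" using \<open>s ! i = Some x\<close> by blast
  qed
  then show ?thesis unfolding robber_moves_def by blast
qed

lemma adj_tip: "tstar_adj n c c' \<Longrightarrow> n < c' \<Longrightarrow> c \<noteq> c' \<Longrightarrow> c + n = c' \<and> c \<noteq> 0 \<and> c \<le> n"
  unfolding tstar_adj_def by auto

lemma lower:
  "cop_wins_within (tstar_V n) (tstar_adj n) j c rs \<Longrightarrow> c \<in> tstar_V n \<Longrightarrow>
   (\<forall>x\<in>pos rs. n < x \<and> x \<le> 2*n) \<Longrightarrow> c \<notin> pos rs \<Longrightarrow> pos rs \<noteq> {} \<Longrightarrow>
   4*(card (pos rs) - 1) + dd n c (pos rs) \<le> j"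
proof (induction j arbitrary: c rs)
  case 0
  then show ?case by (auto simp: pos_def)
next
  case (Suc j)
  have nn: "\<not> (\<forall>r\<in>set rs. r = None)" using Suc.prems(5) by (auto simp: pos_def)
  then obtain c' where c': "c' \<in> tstar_V n" "tstar_adj n c c'"
    and W: "\<forall>rs'. robber_moves (tstar_V n) (tstar_adj n) (capture c' rs) rs' \<longrightarrow>
                cop_wins_within (tstar_V n) (tstar_adj n) j c' (capture c' rs')"
    using Suc.prems(1) by auto
  define P where "P = pos rs"
  have PV: "\<forall>x. Some x \<in> set (capture c' rs) \<longrightarrow> x \<in> tstar_V n"
  proof (intro allI impI)
    fix x assume "Some x \<in> set (capture c' rs)"
    then have "x \<in> pos rs" using capture_pos[of x c' rs] unfolding pos_def by simp
    then show "x \<in> tstar_V n" using Suc.prems(3) unfolding tstar_V_def by auto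
  qed
  have cw: "cop_wins_within (tstar_V n) (tstar_adj n) j c' (capture c' rs)"
    using W rm_refl[OF PV] capture_idem by metis
  have cV: "c \<le> 2*n" using Suc.prems(2) by (simp add: tstar_V_def)
  have c'V: "c' \<le> 2*n" using c'(1) by (simp add: tstar_V_def)
  have cP: "c \<notin> P" using Suc.prems(4) P_def by simp
  have Ptip: "\<forall>x\<in>P. n < x \<and> x \<le> 2*n" using Suc.prems(3) P_def by simp
  have "P \<subseteq> {..2*n}" using Ptip by auto
  then have fin: "finite P" by (rule finite_subset) simp
  show ?case
  proof (cases "P - {c'} = {}")
    case True
    then have Pc: "P = {c'}" using Suc.prems(5) P_def by auto
    then have "n < c'" using Ptip by auto
    moreover have "c \<noteq> c'" using cP Pc by auto
    ultimately have "c + n = c'" "c \<noteq> 0" "c \<le> n" using adj_tip[OF c'(2)] by auto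
    then show ?thesis using Pc P_def[symmetric] by (simp add: dd_def)
  next
    case False
    have IH: "4*(card (P - {c'}) - 1) + dd n c' (P - {c'}) \<le> j"
      using Suc.IH[OF cw c'(1)] False Ptip by (simp add: pos_capture P_def)
    show ?thesis
    proof (cases "c' \<in> P")
      case True
      have cd: "card (P - {c'}) = card P - 1" using True fin by simp
      have c2: "card P \<ge> 2"
      proof -
        obtain z where "z \<in> P" "z \<noteq> c'" using False by auto
        then have "{z, c'} \<subseteq> P" using True by auto
        then have "card {z,c'} \<le> card P" using fin card_mono by blast
        then show ?thesis using \<open>z \<noteq> c'\<close> by simp
      qed
      have "n < c'" using True Ptip by auto
      moreover have "c \<noteq> c'" using cP True by auto
      ultimately have "c + n = c'" "c \<noteq> 0" "c \<le> n" using adj_tip[OF c'(2)] by auto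
      then have "dd n c P = 1" "dd n c' (P - {c'}) = 4" using True \<open>n < c'\<close> by (auto simp: dd_def)
      then show ?thesis using IH cd c2 P_def by simp
    next
      case False
      then have PP: "P - {c'} = P" by simp
      have "dd n c P \<le> dd n c' P + 1"
      proof -
        consider (a) "c = c'" | (b) "c = 0 \<and> 1 \<le> c' \<and> c' \<le> n" | (c) "c' = 0 \<and> 1 \<le> c \<and> c \<le> n"
          | (d) "1 \<le> c \<and> c \<le> n \<and> c' = c + n" | (e) "1 \<le> c' \<and> c' \<le> n \<and> c = c' + n"
          using c'(2) unfolding tstar_adj_def by blast
        then show ?thesis
        proof cases
          case a then show ?thesis by simp
        next
          case b then show ?thesis by (simp add: dd_def)
        next
          case c then show ?thesis by (simp add: dd_def)
        next
          case d then show ?thesis using False by (simp add: dd_def)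
        next
          case e then show ?thesis using cP by (simp add: dd_def)
        qed
      qed
      then show ?thesis using IH PP P_def by simp
    qed
  qed
qed

lemma no_capt:
  assumes m: "m \<ge> 1" and k: "k < 4*m - 2"
  shows "\<not> capt_by (tstar_V (m+1)) (tstar_adj (m+1)) m k"
proof
  let ?n = "m+1"
  assume "capt_by (tstar_V ?n) (tstar_adj ?n) m k"
  then obtain c0 where c0: "c0 \<in> tstar_V ?n" and
    W: "\<forall>rs. length rs = m \<and> set rs \<subseteq> tstar_V ?n \<longrightarrow>
        cop_wins_within (tstar_V ?n) (tstar_adj ?n) k c0 (capture c0 (map Some rs))"
    unfolding capt_by_def by blast
  define b where "b = (if c0 = 0 then ?n else if c0 \<le> ?n then c0 else c0 - ?n)"
  have b: "1 \<le> b" "b \<le> ?n" "c0 = 0 \<or> c0 = b \<or> c0 = b + ?n"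
    using c0 unfolding b_def tstar_V_def by auto
  define g where "g = (\<lambda>i::nat. (if i < b then i else i + 1) + ?n)"
  define rs where "rs = map g [1..<?n]"
  have inj: "inj g" unfolding inj_def g_def by auto
  have len: "length rs = m" unfolding rs_def by simp
  have dist: "distinct rs" unfolding rs_def using inj by (simp add: distinct_map inj_on_subset[OF inj])
  have card: "card (set rs) = m" using distinct_card[OF dist] len by simp
  have rng: "\<forall>x\<in>set rs. ?n < x \<and> x \<le> 2*?n \<and> x \<noteq> b + ?n" unfolding rs_def g_def by auto
  have sV: "set rs \<subseteq> tstar_V ?n" using rng unfolding tstar_V_def by auto
  have c0n: "c0 \<notin> set rs" using rng b by auto
  have cap: "capture c0 (map Some rs) = map Some rs"
    unfolding capture_def using c0n by (induct rs) auto
  have pm: "pos (map Some rs) = set rs" unfolding pos_def by auto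
  have cw: "cop_wins_within (tstar_V ?n) (tstar_adj ?n) k c0 (map Some rs)"
    using W len sV cap by metis
  have ne: "set rs \<noteq> {}" using card m by auto
  have "4*(card (set rs) - 1) + dd ?n c0 (set rs) \<le> k"
    using lower[OF cw c0] rng c0n ne pm by simp
  moreover have "dd ?n c0 (set rs) \<ge> 2"
  proof -
    have nb: "b + ?n \<notin> set rs" using rng by blast
    consider "c0 = 0" | "c0 = b" | "c0 = b + ?n" using b(3) by blast
    then show ?thesis
    proof cases
      case 1 then show ?thesis by (simp add: dd_def)
    next
      case 2 then show ?thesis using b(1,2) nb by (simp add: dd_def)
    next
      case 3 then show ?thesis using b(1) by (simp add: dd_def)
    qed
  qed
  ultimately show False using card k m by simp
qed

theorem mainTheorem10:
  fixes m :: nat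
  assumes "m \<ge> 1"
  shows "capt (tstar_V (m + 1)) (tstar_adj (m + 1)) m = 4 * m - 2"
proof -
  obtain k where m: "m = Suc k" using assms by (cases m) auto
  have up: "capt_by (tstar_V (m+1)) (tstar_adj (m+1)) m (4*m - 2)"
    unfolding capt_by_def
  proof (rule bexI[of _ 0], intro allI impI)
    fix rs :: "nat list"
    assume rs: "length rs = m \<and> set rs \<subseteq> tstar_V (m+1)"
    have P: "\<forall>x. Some x \<in> set (capture 0 (map Some rs)) \<longrightarrow> x \<in> tstar_V (m+1) \<and> x \<noteq> 0"
    proof (intro allI impI)
      fix x assume "Some x \<in> set (capture 0 (map Some rs))"
      then have "Some x \<in> set (map Some rs)" "x \<noteq> 0" using capture_pos[of x 0 "map Some rs"] by simp_all
      then show "x \<in> tstar_V (m+1) \<and> x \<noteq> 0" using rs by auto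
    qed
    have "card (LL (capture 0 (map Some rs))) \<le> card {..<m}"
      using rs by (intro card_mono) (auto simp: LL_def)
    then have "card (LL (capture 0 (map Some rs))) \<le> Suc k" using m by simp
    then have "cop_wins_within (tstar_V (m+1)) (tstar_adj (m+1)) (4*k+2) 0 (capture 0 (map Some rs))"
      using upper[of "m+1" k] P by simp
    moreover have "4*k+2 = 4*m-2" using m by simp
    ultimately show "cop_wins_within (tstar_V (m+1)) (tstar_adj (m+1)) (4*m-2) 0 (capture 0 (map Some rs))"
      by metis
  qed (simp add: tstar_V_def)
  show ?thesis
    unfolding capt_def
    apply (rule Least_equality)
     apply (rule up)
    by (meson no_capt[OF assms] not_le)
qed

end
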